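(* Consider the fractional online multiple knapsack problem (FOMKP) with aggregate value functions under Assumption B, with $\theta=U/L$. Let $\alpha$ be the solution $\alpha>1$ of $\alpha-1-\frac{1}{\alpha-1}=\ln\theta$, and for each knapsack $m$ let $\beta_m^*=\frac{C_m}{\alpha-1}$ and $$\phi_m^*(w)=\begin{cases} L & w\in[0,\beta_m^* ),\\ L\,e^{\frac{\alpha}{C_m}w-\frac{\alpha}{\alpha-1}} & w\in[\beta_m^*,C_m],\\ +\infty & w>C_m.\end{cases}$$ Then the competitive ratio of $\mathsf{OTA}_{\phi^*}$ with $\phi^*=\{\phi^*_m\}_m$ is $\alpha$.
   Context: FOMKP: knapsacks $m\in\mathcal M=\{1,\dots,M\}$ with capacities $C_m>0$; items $n=1,\dots,N$ arrive one at a time. Item $n$ reveals on arrival a size $D_n>0$, rate limits $Y_{nm}\ge 0$, and a value function $g_n$ on $\mathcal Y_n=\{\mathbf y_n\in\mathbb R^M: \sum_m y_{nm}\le D_n,\ 0\le y_{nm}\le Y_{nm}\}$. The offline problem is $\max\sum_n g_n(\mathbf y_n)$ subject to $\mathbf y_n\in\mathcal Y_n$ for all $n$ and $\sum_n y_{nm}\le C_m$ for all $m$. Aggregate value function: $g_n(\mathbf y_n)=g_n(\sum_m y_{nm})$ for a scalar function $g_n$. Assumption B: each $g_n$ is non-decreasing, differentiable and concave on $\mathcal Y_n$, $g_n(\mathbf 0)=0$, and $L\le \partial g_n/\partial y_{nm}\le U$ for all $n,m$, with $L,U>0$ and the $C_m$ known in advance. An online algorithm irrevocably chooses $\mathbf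 y_n$ upon arrival of item $n$ using only items $1,\dots,n$ and the known parameters, keeping all constraints feasible; its competitive ratio is $\sup_{\mathcal I}\mathrm{OPT}(\mathcal I)/\mathrm{ALG}(\mathcal I)$ over all instances satisfying Assumption B (and the value-function class in question). $\mathsf{OTA}_\phi$ for threshold functions $\phi_m$ (non-decreasing on $[0,C_m]$, $+\infty$ beyond $C_m$): start with $w_m^{(1)}=0$; upon arrival of item $n$ choose $\mathbf y_n^*\in\arg\max_{\mathbf y_n\in\mathcal Y_n} g_n(\mathbf y_n)-\sum_m\int_{w_m^{(n)}}^{w_m^{(n)}+y_{nm}}\phi_m(u)du$, and set $w_m^{(n+1)}=w_m^{(n)}+y^*_{nm}$. *)

theory Defs
  imports "HOL-Analysis.Analysis"
begin

text \<open>Knapsacks are indexed by m < M, items by n < N.  An allocation of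
  item n is a vector v :: nat => real with v m = 0 for m >= M.\<close>

definition Yset :: "nat \<Rightarrow> real \<Rightarrow> (nat \<Rightarrow> real) \<Rightarrow> (nat \<Rightarrow> real) set" where
  "Yset M Dn Yn = {v. (\<forall>m<M. 0 \<le> v m \<and> v m \<le> Yn m) \<and> (\<forall>m\<ge>M. v m = 0)
                      \<and> (\<Sum>m<M. v m) \<le> Dn}"

text \<open>Assumption B for a single item with aggregate value function gn
  (the value of allocation v is gn (sum of v m)).\<close>
definition assumptionB ::
  "real \<Rightarrow> real \<Rightarrow> nat \<Rightarrow> real \<Rightarrow> (nat \<Rightarrow> real) \<Rightarrow> (real \<Rightarrow> real) \<Rightarrow> bool" where
  "assumptionB L U M Dn Yn gn \<longleftrightarrow>
     Dn > 0 \<and> (\<forall>m<M. Yn m \<ge> 0) \<and>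
     (let S = (\<lambda>v. \<Sum>m<M. v m) ` Yset M Dn Yn in
        mono_on S gn \<and> concave_on S gn \<and> gn 0 = 0 \<and>
        (\<forall>s\<in>S. \<exists>d. (gn has_real_derivative d) (at s within S) \<and> L \<le> d \<and> d \<le> U))"

definition valid_instance ::
  "real \<Rightarrow> real \<Rightarrow> nat \<Rightarrow> (nat \<Rightarrow> real) \<Rightarrow> nat \<Rightarrow> (nat \<Rightarrow> real) \<Rightarrow>
   (nat \<Rightarrow> nat \<Rightarrow> real) \<Rightarrow> (nat \<Rightarrow> real \<Rightarrow> real) \<Rightarrow> bool" where
  "valid_instance L U M C N D Y g \<longleftrightarrow>
     M \<ge> 1 \<and> (\<forall>m<M. C m > 0) \<and> (\<forall>n<N. assumptionB L U M (D n) (Y n) (g n))"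

definition offline_feasible ::
  "nat \<Rightarrow> (nat \<Rightarrow> real) \<Rightarrow> nat \<Rightarrow> (nat \<Rightarrow> real) \<Rightarrow> (nat \<Rightarrow> nat \<Rightarrow> real) \<Rightarrow>
   (nat \<Rightarrow> nat \<Rightarrow> real) \<Rightarrow> bool" where
  "offline_feasible M C N D Y x \<longleftrightarrow>
     (\<forall>n<N. x n \<in> Yset M (D n) (Y n)) \<and> (\<forall>m<M. (\<Sum>n<N. x n m) \<le> C m)"

definition total_value ::
  "nat \<Rightarrow> nat \<Rightarrow> (nat \<Rightarrow> real \<Rightarrow> real) \<Rightarrow> (nat \<Rightarrow> nat \<Rightarrow> real) \<Rightarrow> real" where
  "total_value M N g x = (\<Sum>n<N. g n (\<Sum>m<M. x n m))"

definition OPT ::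
  "nat \<Rightarrow> (nat \<Rightarrow> real) \<Rightarrow> nat \<Rightarrow> (nat \<Rightarrow> real) \<Rightarrow> (nat \<Rightarrow> nat \<Rightarrow> real) \<Rightarrow>
   (nat \<Rightarrow> real \<Rightarrow> real) \<Rightarrow> real" where
  "OPT M C N D Y g = Sup (total_value M N g ` {x. offline_feasible M C N D Y x})"

text \<open>The threshold function phi*_m on [0, C_m]; the value +infinity beyond C_m
  is encoded by forbidding allocations exceeding the capacity.\<close>
definition phi_star :: "real \<Rightarrow> real \<Rightarrow> real \<Rightarrow> real \<Rightarrow> real" where
  "phi_star L \<alpha> Cm w =
     (if w < Cm / (\<alpha> - 1) then L else L * exp (\<alpha> / Cm * w - \<alpha> / (\<alpha> - 1)))"

definition ota_choice ::
  "(nat \<Rightarrow> real \<Rightarrow> real) \<Rightarrow> nat \<Rightarrow> (nat \<Rightarrow> real) \<Rightarrow> real \<Rightarrow> (nat \<Rightarrow> real) \<Rightarrow>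
   (real \<Rightarrow> real) \<Rightarrow> (nat \<Rightarrow> real) \<Rightarrow> (nat \<Rightarrow> real) \<Rightarrow> bool" where
  "ota_choice \<phi> M C Dn Yn gn w v \<longleftrightarrow>
     (let F = {u \<in> Yset M Dn Yn. \<forall>m<M. w m + u m \<le> C m};
          obj = (\<lambda>u. gn (\<Sum>m<M. u m) - (\<Sum>m<M. integral {w m .. w m + u m} (\<phi> m)))
      in v \<in> F \<and> (\<forall>u\<in>F. obj u \<le> obj v) \<and>
         (\<forall>u\<in>F. obj u = obj v \<longrightarrow> (\<Sum>m<M. u m) \<le> (\<Sum>m<M. v m)))"

definition ota_run ::
  "(nat \<Rightarrow> real \<Rightarrow> real) \<Rightarrow> nat \<Rightarrow> (nat \<Rightarrow> real) \<Rightarrow> nat \<Rightarrow> (nat \<Rightarrow> real) \<Rightarrow>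
   (nat \<Rightarrow> nat \<Rightarrow> real) \<Rightarrow> (nat \<Rightarrow> real \<Rightarrow> real) \<Rightarrow> (nat \<Rightarrow> nat \<Rightarrow> real) \<Rightarrow> bool" where
  "ota_run \<phi> M C N D Y g y \<longleftrightarrow>
     (\<forall>n<N. ota_choice \<phi> M C (D n) (Y n) (g n) (\<lambda>m. \<Sum>k<n. y k m) (y n))"

text \<open>The competitive ratio sup OPT/ALG over all instances (and all executions,
  i.e. adversarial remaining tie-breaking) equals r; OPT/ALG with ALG = 0 < OPT
  counts as +infinity.  The threshold family may depend on the capacities.\<close>
definition competitive_ratio_is ::
  "real \<Rightarrow> real \<Rightarrow> ((nat \<Rightarrow> real) \<Rightarrow> nat \<Rightarrow> real \<Rightarrow> real) \<Rightarrow> real \<Rightarrow> bool" where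
  "competitive_ratio_is L U \<Phi> r \<longleftrightarrow>
     (\<forall>M C N D Y g y. valid_instance L U M C N D Y g \<and> ota_run (\<Phi> C) M C N D Y g y
        \<longrightarrow> OPT M C N D Y g \<le> r * total_value M N g y) \<and>
     (\<forall>c<r. \<exists>M C N D Y g y. valid_instance L U M C N D Y g \<and> ota_run (\<Phi> C) M C N D Y g y
        \<and> OPT M C N D Y g > c * total_value M N g y)"

end

theory Submission
  imports Defs
begin



definition Gp :: "real \<Rightarrow> real \<Rightarrow> real \<Rightarrow> real \<Rightarrow> real" where
  "Gp L \<alpha> C w = L * min w (C / (\<alpha> - 1)) + C / \<alpha> * (phi_star L \<alpha> C w - L)"

context
  fixes L \<alpha> C :: real
  assumes L: "0 < L" and al: "1 < \<alpha>" and C: "0 < C"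
begin

lemma phi_alt: "phi_star L \<alpha> C w = L * exp (max 0 (\<alpha> / C * w - \<alpha> / (\<alpha> - 1)))"
proof (cases "w < C / (\<alpha> - 1)")
  case True
  have "\<alpha> / C * w < \<alpha> / (\<alpha> - 1)"
  proof -
    have "\<alpha> / C * w < \<alpha> / C * (C / (\<alpha> - 1))" using True al C by (intro mult_strict_left_mono) auto
    also have "\<dots> = \<alpha> / (\<alpha> - 1)" using C by simp
    finally show ?thesis .
  qed
  then show ?thesis using True by (simp add: phi_star_def)
next
  case False
  have "\<alpha> / C * w \<ge> \<alpha> / (\<alpha> - 1)"
  proof -
    have "\<alpha> / C * w \<ge> \<alpha> / C * (C / (\<alpha> - 1))" using False al C by (intro mult_left_mono) auto
    moreover have "\<alpha> / C * (C / (\<alpha> - 1)) = \<alpha> / (\<alpha> - 1)" using C by simp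
    ultimately show ?thesis by linarith
  qed
  then show ?thesis using False by (simp add: phi_star_def)
qed

lemma expo_le0: "w \<le> C / (\<alpha> - 1) \<Longrightarrow> \<alpha> / C * w - \<alpha> / (\<alpha> - 1) \<le> 0"
proof -
  assume "w \<le> C / (\<alpha> - 1)"
  hence "\<alpha> / C * w \<le> \<alpha> / C * (C / (\<alpha> - 1))" using al C by (intro mult_left_mono) auto
  moreover have "\<alpha> / C * (C / (\<alpha> - 1)) = \<alpha> / (\<alpha> - 1)" using C by simp
  ultimately show ?thesis by linarith
qed

lemma expo_gt0: "w > C / (\<alpha> - 1) \<Longrightarrow> \<alpha> / C * w - \<alpha> / (\<alpha> - 1) > 0"
proof -
  assume "w > C / (\<alpha> - 1)"
  hence "\<alpha> / C * w > \<alpha> / C * (C / (\<alpha> - 1))" using al C by (intro mult_strict_left_mono) auto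
  moreover have "\<alpha> / C * (C / (\<alpha> - 1)) = \<alpha> / (\<alpha> - 1)" using C by simp
  ultimately show ?thesis by linarith
qed

lemma phi_low: "w \<le> C / (\<alpha> - 1) \<Longrightarrow> phi_star L \<alpha> C w = L"
  using expo_le0 by (simp add: phi_alt)

lemma phi_gt: "w > C / (\<alpha> - 1) \<Longrightarrow> phi_star L \<alpha> C w > L"
  using expo_gt0[of w] L by (simp add: phi_alt)

lemma phi_ge: "L \<le> phi_star L \<alpha> C w"
  using L by (simp add: phi_alt)

lemma phi_mono: "a \<le> b \<Longrightarrow> phi_star L \<alpha> C a \<le> phi_star L \<alpha> C b"
proof -
  assume "a \<le> b"
  hence "\<alpha> / C * a \<le> \<alpha> / C * b" using al C by (intro mult_left_mono) auto
  thus ?thesis using L by (simp add: phi_alt)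
qed

lemma phi_cont: "continuous_on A (phi_star L \<alpha> C)"
  unfolding phi_alt by (intro continuous_intros)

lemma phi_isCont: "isCont (phi_star L \<alpha> C) x"
  using phi_cont[of UNIV] continuous_on_eq_continuous_at by blast

lemma G_cont: "continuous_on A (Gp L \<alpha> C)"
  unfolding Gp_def phi_alt by (intro continuous_intros)

lemma G_deriv:
  assumes "x \<noteq> C / (\<alpha> - 1)"
  shows "(Gp L \<alpha> C has_real_derivative phi_star L \<alpha> C x) (at x)"
proof (cases "x < C / (\<alpha> - 1)")
  case True
  have "((\<lambda>y. L * y) has_real_derivative L) (at x)" by (auto intro!: derivative_eq_intros)
  hence "((\<lambda>y. L * y) has_real_derivative phi_star L \<alpha> C x) (at x)" using True phi_low by simp
  thus ?thesis
  proof (rule has_field_derivative_transform_within_open[where S = "{..< C / (\<alpha> - 1)}"])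
    show "open {..<C / (\<alpha> - 1)}" by simp
    show "x \<in> {..<C / (\<alpha> - 1)}" using True by simp
    fix y assume "y \<in> {..<C / (\<alpha> - 1)}"
    thus "L * y = Gp L \<alpha> C y" using phi_low[of y] by (simp add: Gp_def)
  qed
next
  case False
  hence x: "x > C / (\<alpha> - 1)" using assms by simp
  let ?f = "\<lambda>y. L * (C / (\<alpha> - 1)) + C / \<alpha> * (L * exp (\<alpha> / C * y - \<alpha> / (\<alpha> - 1)) - L)"
  have "(?f has_real_derivative C / \<alpha> * (L * exp (\<alpha> / C * x - \<alpha> / (\<alpha> - 1)) * (\<alpha> / C))) (at x)"
    by (auto intro!: derivative_eq_intros)
  moreover have "C / \<alpha> * (L * exp (\<alpha> / C * x - \<alpha> / (\<alpha> - 1)) * (\<alpha> / C)) = phi_star L \<alpha> C x"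
    using expo_gt0[OF x] C al by (simp add: phi_alt)
  ultimately have "(?f has_real_derivative phi_star L \<alpha> C x) (at x)" by simp
  thus ?thesis
  proof (rule has_field_derivative_transform_within_open[where S = "{C / (\<alpha> - 1)<..}"])
    show "open {C / (\<alpha> - 1)<..}" by simp
    show "x \<in> {C / (\<alpha> - 1)<..}" using x by simp
    fix y assume "y \<in> {C / (\<alpha> - 1)<..}"
    thus "?f y = Gp L \<alpha> C y" using expo_gt0[of y] by (simp add: Gp_def phi_alt)
  qed
qed

lemma phi_has_integral:
  assumes "a \<le> b"
  shows "(phi_star L \<alpha> C has_integral (Gp L \<alpha> C b - Gp L \<alpha> C a)) {a..b}"
proof (rule fundamental_theorem_of_calculus_interior_strong[where S = "{C / (\<alpha> - 1)}"])
  show "finite {C / (\<alpha> - 1)}" by simp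
  show "a \<le> b" by fact
  show "continuous_on {a..b} (Gp L \<alpha> C)" by (rule G_cont)
  fix x assume "x \<in> {a<..<b} - {C / (\<alpha> - 1)}"
  thus "(Gp L \<alpha> C has_vector_derivative phi_star L \<alpha> C x) (at x)"
    using G_deriv[of x] by (simp add: has_real_derivative_iff_has_vector_derivative)
qed

lemma int_phi: "a \<le> b \<Longrightarrow> integral {a..b} (phi_star L \<alpha> C) = Gp L \<alpha> C b - Gp L \<alpha> C a"
  using phi_has_integral by blast

lemma G_bounds:
  assumes "a \<le> b"
  shows "(b - a) * phi_star L \<alpha> C a \<le> Gp L \<alpha> C b - Gp L \<alpha> C a"
    and "Gp L \<alpha> C b - Gp L \<alpha> C a \<le> (b - a) * phi_star L \<alpha> C b"
proof -
  have I: "(phi_star L \<alpha> C has_integral (Gp L \<alpha> C b - Gp L \<alpha> C a)) {a..b}"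
    using phi_has_integral[OF assms] .
  have c1: "((\<lambda>_. phi_star L \<alpha> C a) has_integral (b - a) * phi_star L \<alpha> C a) {a..b}"
    using has_integral_const_real[of "phi_star L \<alpha> C a" a b] assms by simp
  have c2: "((\<lambda>_. phi_star L \<alpha> C b) has_integral (b - a) * phi_star L \<alpha> C b) {a..b}"
    using has_integral_const_real[of "phi_star L \<alpha> C b" a b] assms by simp
  show "(b - a) * phi_star L \<alpha> C a \<le> Gp L \<alpha> C b - Gp L \<alpha> C a"
    by (rule has_integral_le[OF c1 I]) (auto intro: phi_mono)
  show "Gp L \<alpha> C b - Gp L \<alpha> C a \<le> (b - a) * phi_star L \<alpha> C b"
    by (rule has_integral_le[OF I c2]) (auto intro: phi_mono)
qed

lemma G_signed: "Gp L \<alpha> C (a + z) - Gp L \<alpha> C (a + v) \<le> (z - v) * phi_star L \<alpha> C (a + z)"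
proof (cases "v \<le> z")
  case True
  thus ?thesis using G_bounds(2)[of "a + v" "a + z"] by simp
next
  case False
  thus ?thesis using G_bounds(1)[of "a + z" "a + v"] by (simp add: algebra_simps)
qed

lemma G_low: "w \<le> C / (\<alpha> - 1) \<Longrightarrow> Gp L \<alpha> C w = L * w"
  using phi_low by (simp add: Gp_def)

lemma G_high: "w \<ge> C / (\<alpha> - 1) \<Longrightarrow> \<alpha> * Gp L \<alpha> C w = C * phi_star L \<alpha> C w + L * (C / (\<alpha> - 1))"
  using al C by (simp add: Gp_def field_simps)

lemma G_nonneg: "0 \<le> w \<Longrightarrow> 0 \<le> Gp L \<alpha> C w"
  using G_bounds(1)[of 0 w] G_low[of 0] phi_ge[of 0] L al C
  by (smt (verit) divide_pos_pos mult_nonneg_nonneg)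

end



lemma concave_tangent:
  fixes g :: "real \<Rightarrow> real"
  assumes conc: "concave_on S g" and der: "(g has_real_derivative d) (at c within S)"
    and cS: "c \<in> S" and xS: "x \<in> S"
  shows "g x \<le> g c + d * (x - c)"
proof (cases "x = c")
  case True thus ?thesis by simp
next
  case False
  define y where "y = (\<lambda>t::real. c + t * (x - c))"
  have cvx: "convex S" using conc concave_on_imp_convex by blast
  have yS: "y t \<in> S" if "0 \<le> t" "t \<le> 1" for t
  proof -
    have "(1 - t) *\<^sub>R c + t *\<^sub>R x \<in> S" using cvx cS xS that by (intro convexD) auto
    thus ?thesis by (simp add: y_def algebra_simps)
  qed
  have ev: "eventually (\<lambda>t. 0 < t \<and> t \<le> 1) (at_right (0::real))"
    by (simp add: eventually_at_right_field) (rule exI[of _ 1], auto)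
  have lim_y: "filterlim y (at c within S) (at_right 0)"
    unfolding filterlim_at
  proof
    show "eventually (\<lambda>t. y t \<in> S \<and> y t \<noteq> c) (at_right 0)"
      using ev by eventually_elim (use yS False in \<open>auto simp: y_def\<close>)
    have "((\<lambda>t. c + t * (x - c)) \<longlongrightarrow> c + 0 * (x - c)) (at_right 0)"
      by (intro tendsto_intros)
    thus "(y \<longlongrightarrow> c) (at_right 0)" by (simp add: y_def)
  qed
  have "((\<lambda>z. (g z - g c) / (z - c)) \<longlongrightarrow> d) (at c within S)"
    using der by (simp add: has_field_derivative_iff)
  hence "((\<lambda>t. (g (y t) - g c) / (y t - c)) \<longlongrightarrow> d) (at_right 0)"
    using filterlim_compose lim_y by blast
  hence lim: "((\<lambda>t. (g (y t) - g c) / (y t - c) * (x - c)) \<longlongrightarrow> d * (x - c)) (at_right 0)"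
    by (intro tendsto_intros)
  have "eventually (\<lambda>t. g x - g c \<le> (g (y t) - g c) / (y t - c) * (x - c)) (at_right 0)"
    using ev
  proof eventually_elim
    case (elim t)
    have "g ((1 - t) *\<^sub>R c + t *\<^sub>R x) \<ge> (1 - t) * g c + t * g x"
      using concave_onD[OF conc, of t c x] elim cS xS by auto
    hence "g (y t) \<ge> (1 - t) * g c + t * g x" by (simp add: y_def algebra_simps)
    hence "t * (g x - g c) \<le> g (y t) - g c" by (simp add: algebra_simps)
    hence "g x - g c \<le> (g (y t) - g c) / t" using elim by (simp add: field_simps)
    moreover have "(g (y t) - g c) / (y t - c) * (x - c) = (g (y t) - g c) / t"
      using elim False by (simp add: y_def field_simps)
    ultimately show ?case by simp
  qed
  from tendsto_lowerbound[OF lim this] have "g x - g c \<le> d * (x - c)" by simp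
  thus ?thesis by simp
qed




lemma sum_change_one:
  fixes F :: "nat \<Rightarrow> real \<Rightarrow> real"
  assumes "m < M" "\<And>k. k \<noteq> m \<Longrightarrow> z k = v k"
  shows "(\<Sum>k<M. F k (z k)) = (\<Sum>k<M. F k (v k)) + (F m (z m) - F m (v m))"
proof -
  have A: "(\<Sum>k<M. F k (z k)) = F m (z m) + (\<Sum>k\<in>{..<M} - {m}. F k (z k))"
    using assms(1) by (subst sum.remove[of _ m]) auto
  have B: "(\<Sum>k<M. F k (v k)) = F m (v m) + (\<Sum>k\<in>{..<M} - {m}. F k (v k))"
    using assms(1) by (subst sum.remove[of _ m]) auto
  have "(\<Sum>k\<in>{..<M} - {m}. F k (z k)) = (\<Sum>k\<in>{..<M} - {m}. F k (v k))"
    using assms(2) by (intro sum.cong) auto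
  thus ?thesis using A B by simp
qed

lemma sum_change_one':
  fixes z v :: "nat \<Rightarrow> real"
  assumes "m < M" "\<And>k. k \<noteq> m \<Longrightarrow> z k = v k"
  shows "(\<Sum>k<M. z k) = (\<Sum>k<M. v k) + (z m - v m)"
  using sum_change_one[of m M z v "\<lambda>k r. r"] assms by simp

context
  fixes L U \<alpha> :: real and M :: nat and C :: "nat \<Rightarrow> real" and Dn :: real
    and Yn :: "nat \<Rightarrow> real" and gn :: "real \<Rightarrow> real" and w v W :: "nat \<Rightarrow> real"
  assumes L: "0 < L" and LU: "L \<le> U" and al: "1 < \<alpha>"
    and logeq: "\<alpha> - 1 - 1 / (\<alpha> - 1) = ln (U / L)"
    and Cpos: "\<forall>m<M. 0 < C m"
    and aB: "assumptionB L U M Dn Yn gn"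
    and oc: "ota_choice (\<lambda>m. phi_star L \<alpha> (C m)) M C Dn Yn gn w v"
    and w0: "\<forall>m<M. 0 \<le> w m"
    and WW: "\<forall>m<M. w m + v m \<le> W m \<and> W m \<le> C m"
begin

abbreviation "ph m \<equiv> phi_star L \<alpha> (C m)"
abbreviation "GG m \<equiv> Gp L \<alpha> (C m)"
abbreviation "bt m \<equiv> C m / (\<alpha> - 1)"
abbreviation "SS \<equiv> (\<lambda>v. \<Sum>m<M. v m) ` Yset M Dn Yn"
abbreviation "FF \<equiv> {u \<in> Yset M Dn Yn. \<forall>m<M. w m + u m \<le> C m}"
abbreviation "obj u \<equiv> gn (\<Sum>m<M. u m) - (\<Sum>m<M. integral {w m..w m + u m} (ph m))"

lemma oc': "v \<in> FF" "\<And>u. u \<in> FF \<Longrightarrow> obj u \<le> obj v"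
  "\<And>u. u \<in> FF \<Longrightarrow> obj u = obj v \<Longrightarrow> (\<Sum>m<M. u m) \<le> (\<Sum>m<M. v m)"
  using oc unfolding ota_choice_def Let_def by auto

lemma aB': "Dn > 0" "\<forall>m<M. Yn m \<ge> 0" "mono_on SS gn" "concave_on SS gn" "gn 0 = 0"
  "\<And>s. s \<in> SS \<Longrightarrow> \<exists>d. (gn has_real_derivative d) (at s within SS) \<and> L \<le> d \<and> d \<le> U"
  using aB unfolding assumptionB_def Let_def by auto

lemma inSS: "u \<in> Yset M Dn Yn \<Longrightarrow> (\<Sum>m<M. u m) \<in> SS" by blast

lemma obj_G: "u \<in> Yset M Dn Yn \<Longrightarrow>
  obj u = gn (\<Sum>m<M. u m) - (\<Sum>m<M. GG m (w m + u m) - GG m (w m))"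
  unfolding Yset_def using int_phi[OF L al] Cpos by (intro arg_cong2[where f = "(-)"] refl sum.cong) auto

lemma alpha2: "2 \<le> \<alpha>"
proof -
  have "U / L \<ge> 1" using L LU by simp
  hence "ln (U / L) \<ge> 0" by simp
  hence "\<alpha> - 1 \<ge> 1 / (\<alpha> - 1)" using logeq by simp
  hence "(\<alpha> - 1) * (\<alpha> - 1) \<ge> 1" using al by (simp add: field_simps)
  moreover have "(\<alpha> - 1) * (\<alpha> - 1) < 1" if "\<alpha> - 1 < 1"
    using mult_strict_mono[of "\<alpha> - 1" 1 "\<alpha> - 1" 1] that al by simp
  ultimately show ?thesis by linarith
qed

lemma bt_le_C: "m < M \<Longrightarrow> bt m \<le> C m"
  using alpha2 Cpos by (simp add: field_simps)

lemma phi_C: "m < M \<Longrightarrow> ph m (C m) = U"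
proof -
  assume m: "m < M"
  have Cm: "C m > 0" using Cpos m by simp
  have "\<alpha> / C m * C m - \<alpha> / (\<alpha> - 1) = \<alpha> - 1 - 1 / (\<alpha> - 1)"
    using Cm al by (simp add: field_simps)
  also have "\<dots> = ln (U / L)" by (rule logeq)
  finally have e: "\<alpha> / C m * C m - \<alpha> / (\<alpha> - 1) = ln (U / L)" .
  have "ln (U / L) \<ge> 0" using L LU by simp
  hence "ph m (C m) = L * exp (ln (U / L))" using phi_alt[OF L al, of "C m"] Cpos m e by simp
  also have "\<dots> = U" using L LU by simp
  finally show ?thesis .
qed

lemma gn_tan: assumes "s \<in> SS" "t \<in> SS" shows "\<exists>d. L \<le> d \<and> d \<le> U \<and> gn t \<le> gn s + d * (t - s)"
proof -
  obtain d where d: "(gn has_real_derivative d) (at s within SS)" "L \<le> d" "d \<le> U" using aB'(6)[OF assms(1)] by blast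
  show ?thesis using concave_tangent[OF aB'(4) d(1) assms] d by blast
qed

lemma gn_lip: assumes "s \<in> SS" "t \<in> SS" "s \<le> t" shows "gn t - gn s \<le> U * (t - s)"
proof -
  obtain d where d: "L \<le> d" "d \<le> U" "gn t \<le> gn s + d * (t - s)" using gn_tan[OF assms(1,2)] by blast
  have "d * (t - s) \<le> U * (t - s)" using d assms(3) by (intro mult_right_mono) auto
  thus ?thesis using d by simp
qed

lemma gn_grow: assumes "s \<in> SS" "t \<in> SS" "s \<le> t" shows "L * (t - s) \<le> gn t - gn s"
proof -
  obtain d where d: "L \<le> d" "d \<le> U" "gn s \<le> gn t + d * (s - t)" using gn_tan[OF assms(2,1)] by blast
  have "L * (t - s) \<le> d * (t - s)" using d assms(3) by (intro mult_right_mono) auto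
  thus ?thesis using d by (simp add: algebra_simps)
qed

lemma vY: "\<forall>m<M. 0 \<le> v m \<and> v m \<le> Yn m" "\<forall>m\<ge>M. v m = 0" "(\<Sum>m<M. v m) \<le> Dn"
  "\<forall>m<M. w m + v m \<le> C m"
  using oc'(1) unfolding Yset_def by auto

lemma sv_eq_D:
  assumes m: "m < M" and Wm: "W m < bt m" and vm: "v m < Yn m"
  shows "(\<Sum>k<M. v k) = Dn"
proof (rule ccontr)
  assume "(\<Sum>k<M. v k) \<noteq> Dn"
  hence lt: "(\<Sum>k<M. v k) < Dn" using vY(3) by simp
  define e where "e = min (Dn - (\<Sum>k<M. v k)) (min (Yn m - v m) (bt m - W m))"
  have e0: "e > 0" using lt vm Wm by (simp add: e_def)
  define z where "z = v(m := v m + e)"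
  have zo: "\<And>k. k \<noteq> m \<Longrightarrow> z k = v k" by (simp add: z_def)
  have sz: "(\<Sum>k<M. z k) = (\<Sum>k<M. v k) + e"
    using sum_change_one'[OF m zo] by (simp add: z_def)
  have wv: "w m + v m \<le> W m" using WW m by simp
  have zY: "z \<in> Yset M Dn Yn"
    unfolding Yset_def using vY m e0 sz by (auto simp: z_def e_def)
  have zF: "z \<in> FF"
    using zY vY(4) m e0 bt_le_C[OF m] wv by (auto simp: z_def e_def)
  have Gz: "(\<Sum>k<M. GG k (w k + z k) - GG k (w k)) = (\<Sum>k<M. GG k (w k + v k) - GG k (w k)) + L * e"
  proof -
    have "(\<Sum>k<M. GG k (w k + z k) - GG k (w k)) = (\<Sum>k<M. GG k (w k + v k) - GG k (w k))
      + (GG m (w m + z m) - GG m (w m + v m))"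
      using sum_change_one[OF m zo, where F = "\<lambda>k r. GG k (w k + r) - GG k (w k)"] by simp
    moreover have "GG m (w m + z m) = L * (w m + v m + e)"
      using G_low[OF L al, of "C m" "w m + z m"] Cpos m wv by (simp add: z_def e_def)
    moreover have "GG m (w m + v m) = L * (w m + v m)"
      using G_low[OF L al, of "C m" "w m + v m"] Cpos m wv Wm by simp
    ultimately show ?thesis by (simp add: algebra_simps)
  qed
  have "L * e \<le> gn (\<Sum>k<M. z k) - gn (\<Sum>k<M. v k)"
    using gn_grow[OF inSS[OF oc'(1)[THEN CollectD, THEN conjunct1]] inSS[OF zY]] sz e0 by simp
  hence "obj z \<ge> obj v"
    using obj_G[OF zY] obj_G[OF oc'(1)[THEN CollectD, THEN conjunct1]] Gz by simp
  hence "obj z = obj v" using oc'(2)[OF zF] by simp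
  hence "(\<Sum>k<M. z k) \<le> (\<Sum>k<M. v k)" using oc'(3)[OF zF] by simp
  thus False using sz e0 by simp
qed

lemma vY': "v \<in> Yset M Dn Yn" using oc'(1) by blast

lemma J_nonpos:
  assumes m: "m < M" and Wm: "W m < bt m" and vm: "v m < Yn m" and m': "m' < M"
  shows "GG m' (max (w m' + v m') (bt m')) - GG m' (max (w m') (bt m')) \<le> 0"
proof (rule ccontr)
  assume J: "\<not> ?thesis"
  have v'0: "0 \<le> v m'" using vY m' by auto
  have hi: "w m' + v m' > bt m'"
  proof (rule ccontr)
    assume "\<not> w m' + v m' > bt m'"
    hence "max (w m' + v m') (bt m') = bt m'" "max (w m') (bt m') = bt m'" using v'0 by auto
    thus False using J by simp
  qed
  have vpos: "v m' > 0"
  proof (rule ccontr)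
    assume "\<not> v m' > 0" hence "v m' = 0" using v'0 by simp
    thus False using J by simp
  qed
  have wvm: "w m + v m \<le> W m" using WW m by simp
  have mm: "m' \<noteq> m" using hi wvm Wm by auto
  define e where "e = min (v m') (min ((w m' + v m' - bt m') / 2) (min (Yn m - v m) (bt m - W m)))"
  have e0: "e > 0" using vpos hi vm Wm by (simp add: e_def)
  have e1: "e \<le> v m'" "e \<le> (w m' + v m' - bt m') / 2" "e \<le> Yn m - v m" "e \<le> bt m - W m"
    unfolding e_def
       apply (rule min.cobounded1)
      apply (rule min.coboundedI2, rule min.cobounded1)
     apply (rule min.coboundedI2, rule min.coboundedI2, rule min.cobounded1)
    apply (rule min.coboundedI2, rule min.coboundedI2, rule min.cobounded2)
    done
  define z1 where "z1 = v(m := v m + e)"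
  define z where "z = z1(m' := v m' - e)"
  have z1o: "\<And>k. k \<noteq> m \<Longrightarrow> z1 k = v k" by (simp add: z1_def)
  have zo: "\<And>k. k \<noteq> m' \<Longrightarrow> z k = z1 k" by (simp add: z_def)
  have z1m': "z1 m' = v m'" using mm by (simp add: z1_def)
  have zm: "z m = v m + e" using mm by (simp add: z_def z1_def)
  have zm': "z m' = v m' - e" by (simp add: z_def)
  have sz: "(\<Sum>k<M. z k) = (\<Sum>k<M. v k)"
    using sum_change_one'[OF m' zo] sum_change_one'[OF m z1o] z1m' zm'
    by (simp add: z1_def)
  have zY: "z \<in> Yset M Dn Yn"
    unfolding Yset_def
  proof (intro CollectI conjI allI impI)
    fix k assume k: "k < M"
    show "0 \<le> z k" using vY k e1 e0 by (cases "k = m'"; cases "k = m") (auto simp: z_def z1_def)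
    show "z k \<le> Yn k" using vY k e1 e0 by (cases "k = m'"; cases "k = m") (auto simp: z_def z1_def)
  next
    fix k assume k: "M \<le> k"
    thus "z k = 0" using vY m m' by (auto simp: z_def z1_def)
  next
    show "(\<Sum>k<M. z k) \<le> Dn" using sz vY by simp
  qed
  have zF: "z \<in> FF"
  proof -
    have "w k + z k \<le> C k" if k: "k < M" for k
    proof (cases "k = m'")
      case True
      have "w m' + v m' \<le> C m'" using vY(4) m' by simp
      thus ?thesis using True e0 by (simp add: z_def)
    next
      case False
      show ?thesis
      proof (cases "k = m")
        case True thus ?thesis using zm e1 wvm bt_le_C[OF m] by simp
      next
        case False
        thus ?thesis using \<open>k \<noteq> m'\<close> vY(4) k by (simp add: z_def z1_def)
      qed
    qed
    thus ?thesis using zY by blast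
  qed
  let ?h = "\<lambda>k r. GG k (w k + r) - GG k (w k)"
  have "(\<Sum>k<M. ?h k (z k)) = (\<Sum>k<M. ?h k (z1 k)) + (?h m' (z m') - ?h m' (z1 m'))"
    using sum_change_one[OF m' zo, where F = ?h] by simp
  also have "(\<Sum>k<M. ?h k (z1 k)) = (\<Sum>k<M. ?h k (v k)) + (?h m (z1 m) - ?h m (v m))"
    using sum_change_one[OF m z1o, where F = ?h] by simp
  finally have Hs: "(\<Sum>k<M. ?h k (z k)) = (\<Sum>k<M. ?h k (v k))
     + (GG m (w m + v m + e) - GG m (w m + v m)) + (GG m' (w m' + v m' - e) - GG m' (w m' + v m'))"
    using z1m' zm' by (simp add: z1_def algebra_simps)
  have Cm: "C m > 0" and Cm': "C m' > 0" using Cpos m m' by auto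
  have g1: "GG m (w m + v m + e) - GG m (w m + v m) = L * e"
    using G_low[OF L al Cm, of "w m + v m + e"] G_low[OF L al Cm, of "w m + v m"] wvm e1 Wm
    by (simp add: algebra_simps)
  have g2: "GG m' (w m' + v m') - GG m' (w m' + v m' - e) \<ge> e * ph m' (w m' + v m' - e)"
    using G_bounds(1)[OF L al Cm', of "w m' + v m' - e" "w m' + v m'"] e0 by simp
  have "ph m' (w m' + v m' - e) > L" using phi_gt[OF L al Cm'] e1 hi e0 by simp
  hence "e * ph m' (w m' + v m' - e) > e * L" using e0 by simp
  hence "(\<Sum>k<M. ?h k (z k)) < (\<Sum>k<M. ?h k (v k))" using Hs g1 g2 by (simp add: algebra_simps)
  hence "obj z > obj v" using obj_G[OF zY] obj_G[OF vY'] sz by simp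
  thus False using oc'(2)[OF zF] by simp
qed

lemma kkt:
  assumes xY: "x \<in> Yset M Dn Yn"
  shows "gn (\<Sum>m<M. x m) - gn (\<Sum>m<M. v m) \<le> (\<Sum>m<M. (x m - v m) * ph m (w m + v m))"
proof -
  have xP: "\<forall>m<M. 0 \<le> x m \<and> x m \<le> Yn m" "\<forall>m\<ge>M. x m = 0" "(\<Sum>m<M. x m) \<le> Dn"
    using xY unfolding Yset_def by auto
  define x' where "x' = (\<lambda>m. if w m + v m = C m then min (x m) (v m) else x m)"
  have x'le: "\<forall>m<M. 0 \<le> x' m \<and> x' m \<le> x m" using xP vY by (auto simp: x'_def)
  have sx'le: "(\<Sum>m<M. x' m) \<le> (\<Sum>m<M. x m)" using x'le by (intro sum_mono) auto
  have x'Y: "x' \<in> Yset M Dn Yn"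
    unfolding Yset_def using x'le xP vY sx'le by (auto simp: x'_def)
  have step1: "gn (\<Sum>m<M. x m) - gn (\<Sum>m<M. x' m) \<le> (\<Sum>m<M. (x m - x' m) * ph m (w m + v m))"
  proof -
    have "gn (\<Sum>m<M. x m) - gn (\<Sum>m<M. x' m) \<le> U * ((\<Sum>m<M. x m) - (\<Sum>m<M. x' m))"
      using gn_lip[OF inSS[OF x'Y] inSS[OF xY] sx'le] .
    also have "\<dots> = (\<Sum>m<M. U * (x m - x' m))" by (metis sum_distrib_left sum_subtractf)
    also have "\<dots> = (\<Sum>m<M. (x m - x' m) * ph m (w m + v m))"
    proof (rule sum.cong)
      fix m assume m: "m \<in> {..<M}"
      show "U * (x m - x' m) = (x m - x' m) * ph m (w m + v m)"
      proof (cases "w m + v m = C m")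
        case True thus ?thesis using phi_C m by simp
      next
        case False thus ?thesis by (simp add: x'_def)
      qed
    qed simp
    finally show ?thesis .
  qed
  define R where "R = (\<lambda>t. \<Sum>m<M. (x' m - v m) * ph m (w m + v m + t * (x' m - v m)))"
  have ev: "eventually (\<lambda>t. 0 < t \<and> t \<le> 1 \<and> (\<forall>m\<in>{..<M}. w m + v m + t * (x' m - v m) \<le> C m)) (at_right (0::real))"
  proof -
    have e1: "eventually (\<lambda>t. 0 < t \<and> t \<le> (1::real)) (at_right 0)"
      by (simp add: eventually_at_right_field) (rule exI[of _ 1], auto)
    have e2: "eventually (\<lambda>t. \<forall>m\<in>{..<M}. w m + v m + t * (x' m - v m) \<le> C m) (at_right 0)"
    proof (rule eventually_ball_finite, simp, intro ballI)
      fix m assume m: "m \<in> {..<M}"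
      show "eventually (\<lambda>t. w m + v m + t * (x' m - v m) \<le> C m) (at_right 0)"
      proof (cases "w m + v m = C m")
        case True
        hence "x' m \<le> v m" by (simp add: x'_def)
        hence "\<forall>t>0. t * (x' m - v m) \<le> 0" by (simp add: mult_nonneg_nonpos)
        thus ?thesis using True by (simp add: eventually_at_right_field) (rule exI[of _ 1], auto)
      next
        case False
        hence lt: "w m + v m < C m" using vY(4) m by force
        define d where "d = (C m - (w m + v m)) / (x' m + 1)"
        have x'0: "x' m \<ge> 0" using x'le m by simp
        have d0: "d > 0" using lt x'0 by (simp add: d_def)
        have "\<forall>t>0. t < d \<longrightarrow> w m + v m + t * (x' m - v m) \<le> C m"
        proof (intro allI impI)
          fix t :: real assume t: "t > 0" "t < d"
          have "t * (x' m - v m) \<le> t * (x' m + 1)" using t vY m by (intro mult_left_mono) auto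
          also have "\<dots> \<le> d * (x' m + 1)" using t x'0 by (intro mult_right_mono) auto
          also have "\<dots> = C m - (w m + v m)" using x'0 by (simp add: d_def)
          finally show "w m + v m + t * (x' m - v m) \<le> C m" by simp
        qed
        thus ?thesis using d0 by (simp add: eventually_at_right_field) blast
      qed
    qed
    show ?thesis using e1 e2 by eventually_elim auto
  qed
  have ev2: "eventually (\<lambda>t. gn (\<Sum>m<M. x' m) - gn (\<Sum>m<M. v m) \<le> R t) (at_right 0)"
    using ev
  proof eventually_elim
    case (elim t)
    hence t: "0 < t" "t \<le> 1" and cap: "\<forall>m\<in>{..<M}. w m + v m + t * (x' m - v m) \<le> C m" by auto
    define z where "z = (\<lambda>m. v m + t * (x' m - v m))"
    have sz: "(\<Sum>m<M. z m) = (1 - t) * (\<Sum>m<M. v m) + t * (\<Sum>m<M. x' m)"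
      by (simp add: z_def sum.distrib sum_distrib_left sum_subtractf algebra_simps)
    have zc: "z m = (1 - t) * v m + t * x' m" for m by (simp add: z_def algebra_simps)
    have zY: "z \<in> Yset M Dn Yn"
      unfolding Yset_def
    proof (intro CollectI conjI allI impI)
      fix m assume m: "m < M"
      have a0: "x' m \<le> x m" "x m \<le> Yn m" using x'le xP m by auto
      have a: "0 \<le> v m" "v m \<le> Yn m" "0 \<le> x' m" "x' m \<le> Yn m" using vY x'le a0 m by auto
      have "0 \<le> (1 - t) * v m + t * x' m" using a t by simp
      thus "0 \<le> z m" by (simp add: zc)
      have "(1 - t) * v m + t * x' m \<le> (1 - t) * Yn m + t * Yn m"
        using a t by (intro add_mono mult_left_mono) auto
      thus "z m \<le> Yn m" by (simp add: zc algebra_simps)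
    next
      fix m assume "M \<le> m" thus "z m = 0" using vY xP by (simp add: z_def x'_def)
    next
      have "(1 - t) * (\<Sum>m<M. v m) + t * (\<Sum>m<M. x' m) \<le> (1 - t) * Dn + t * Dn"
        using vY x'Y t unfolding Yset_def by (intro add_mono mult_left_mono) auto
      thus "(\<Sum>m<M. z m) \<le> Dn" by (simp add: sz algebra_simps)
    qed
    have zF: "z \<in> FF" using zY cap by (auto simp: z_def add.assoc)
    have "obj z \<le> obj v" by (rule oc'(2)[OF zF])
    hence "gn (\<Sum>m<M. z m) - gn (\<Sum>m<M. v m) \<le> (\<Sum>m<M. GG m (w m + z m) - GG m (w m))
          - (\<Sum>m<M. GG m (w m + v m) - GG m (w m))"
      using obj_G[OF zY] obj_G[OF vY'] by simp
    also have "\<dots> = (\<Sum>m<M. GG m (w m + z m) - GG m (w m + v m))"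
      by (simp add: sum_subtractf[symmetric])
    also have "\<dots> \<le> (\<Sum>m<M. (z m - v m) * ph m (w m + z m))"
      using G_signed[OF L al] Cpos by (intro sum_mono) auto
    also have "\<dots> = t * R t"
      by (simp add: R_def z_def sum_distrib_left algebra_simps)
    finally have A: "gn (\<Sum>m<M. z m) - gn (\<Sum>m<M. v m) \<le> t * R t" .
    have "gn ((1 - t) *\<^sub>R (\<Sum>m<M. v m) + t *\<^sub>R (\<Sum>m<M. x' m)) \<ge> (1 - t) * gn (\<Sum>m<M. v m) + t * gn (\<Sum>m<M. x' m)"
      using concave_onD[OF aB'(4), of t] t inSS[OF vY'] inSS[OF x'Y] by simp
    hence "gn (\<Sum>m<M. z m) \<ge> (1 - t) * gn (\<Sum>m<M. v m) + t * gn (\<Sum>m<M. x' m)"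
      by (simp add: sz)
    hence "t * (gn (\<Sum>m<M. x' m) - gn (\<Sum>m<M. v m)) \<le> t * R t" using A by (simp add: algebra_simps)
    thus ?case using t by simp
  qed
  have lim: "(R \<longlongrightarrow> R 0) (at_right 0)"
    unfolding R_def
  proof (intro tendsto_sum tendsto_mult tendsto_const)
    fix m assume m: "m \<in> {..<M}"
    have Cm: "C m > 0" using Cpos m by simp
    have "((\<lambda>t. w m + v m + t * (x' m - v m)) \<longlongrightarrow> w m + v m + 0 * (x' m - v m)) (at_right 0)"
      by (intro tendsto_intros)
    thus "((\<lambda>t. ph m (w m + v m + t * (x' m - v m))) \<longlongrightarrow> ph m (w m + v m + 0 * (x' m - v m))) (at_right 0)"
      by (intro isCont_tendsto_compose[OF phi_isCont[OF L al Cm]])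
  qed
  have step2: "gn (\<Sum>m<M. x' m) - gn (\<Sum>m<M. v m) \<le> R 0"
    by (rule tendsto_lowerbound[OF lim ev2]) simp
  have "gn (\<Sum>m<M. x m) - gn (\<Sum>m<M. v m) \<le> (\<Sum>m<M. (x m - x' m) * ph m (w m + v m)) + R 0"
    using step1 step2 by simp
  also have "\<dots> = (\<Sum>m<M. (x m - v m) * ph m (w m + v m))"
    by (simp add: R_def sum.distrib[symmetric] algebra_simps)
  finally show ?thesis .
qed

lemma alg_lower: "(\<Sum>m<M. GG m (w m + v m) - GG m (w m)) \<le> gn (\<Sum>m<M. v m)"
proof -
  have zY: "(\<lambda>_. 0) \<in> Yset M Dn Yn" using aB'(1,2) unfolding Yset_def by auto
  have "\<forall>m<M. w m + 0 \<le> C m" using vY by force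
  hence zF: "(\<lambda>_. 0) \<in> FF" using zY by auto
  have "obj (\<lambda>_. 0) \<le> obj v" by (rule oc'(2)[OF zF])
  thus ?thesis using obj_G[OF zY] obj_G[OF vY'] aB'(5) by simp
qed

lemma item_bound:
  assumes xY: "x \<in> Yset M Dn Yn"
  shows "gn (\<Sum>m<M. x m) \<le> gn (\<Sum>m<M. v m)
     + (\<Sum>m<M. if bt m \<le> W m then ph m (W m) * x m else 0)
     - (\<Sum>m<M. GG m (max (w m + v m) (bt m)) - GG m (max (w m) (bt m)))"
proof -
  have xP: "\<forall>m<M. 0 \<le> x m \<and> x m \<le> Yn m" "\<forall>m\<ge>M. x m = 0" "(\<Sum>m<M. x m) \<le> Dn"
    using xY unfolding Yset_def by auto
  have Hnn: "0 \<le> (\<Sum>m<M. if bt m \<le> W m then ph m (W m) * x m else 0)"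
  proof (intro sum_nonneg)
    fix m assume m: "m \<in> {..<M}"
    have "0 \<le> ph m (W m)" using phi_ge[OF L al, of "C m" "W m"] Cpos m L by simp
    thus "0 \<le> (if bt m \<le> W m then ph m (W m) * x m else 0)" using xP m by simp
  qed
  show ?thesis
  proof (cases "\<exists>m<M. W m < bt m \<and> x m > v m")
    case True
    then obtain m where m: "m < M" "W m < bt m" "x m > v m" by blast
    have vm: "v m < Yn m" using m xP by force
    have sD: "(\<Sum>k<M. v k) = Dn" using sv_eq_D[OF m(1,2) vm] .
    have Jn: "(\<Sum>k<M. GG k (max (w k + v k) (bt k)) - GG k (max (w k) (bt k))) \<le> 0"
      using J_nonpos[OF m(1,2) vm] by (intro sum_nonpos) auto
    have "gn (\<Sum>m<M. x m) \<le> gn (\<Sum>m<M. v m)"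
      using mono_onD[OF aB'(3) inSS[OF xY] inSS[OF vY']] xP(3) sD by simp
    thus ?thesis using Hnn Jn by simp
  next
    case False
    have "gn (\<Sum>m<M. x m) - gn (\<Sum>m<M. v m) \<le> (\<Sum>m<M. (x m - v m) * ph m (w m + v m))"
      by (rule kkt[OF xY])
    also have "\<dots> \<le> (\<Sum>m<M. (if bt m \<le> W m then ph m (W m) * x m else 0)
        - (GG m (max (w m + v m) (bt m)) - GG m (max (w m) (bt m))))"
    proof (rule sum_mono)
      fix m assume m: "m \<in> {..<M}"
      have Cm: "C m > 0" using Cpos m by simp
      have f: "0 \<le> v m" "0 \<le> x m" "0 \<le> w m" "w m + v m \<le> W m" "W m \<le> C m"
        using vY xP w0 WW m by auto
      show "(x m - v m) * ph m (w m + v m) \<le> (if bt m \<le> W m then ph m (W m) * x m else 0)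
        - (GG m (max (w m + v m) (bt m)) - GG m (max (w m) (bt m)))"
      proof (cases "bt m \<le> W m")
        case True
        have p1: "ph m (w m + v m) \<le> ph m (W m)" using phi_mono[OF L al Cm] f by simp
        have p2: "x m * ph m (w m + v m) \<le> x m * ph m (W m)" using p1 f by (intro mult_left_mono) auto
        have pnn: "0 \<le> ph m (w m + v m)" using phi_ge[OF L al Cm, of "w m + v m"] L by simp
        have J: "GG m (max (w m + v m) (bt m)) - GG m (max (w m) (bt m)) \<le> v m * ph m (w m + v m)"
        proof (cases "w m + v m \<le> bt m")
          case True
          hence "max (w m + v m) (bt m) = bt m" "max (w m) (bt m) = bt m" using f by auto
          thus ?thesis using f pnn by simp
        next
          case False
          hence e1: "max (w m + v m) (bt m) = w m + v m" by simp
          define a where "a = max (w m) (bt m)"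
          have a1: "a \<le> w m + v m" "w m + v m - a \<le> v m" using False f by (auto simp: a_def)
          have "GG m (w m + v m) - GG m a \<le> (w m + v m - a) * ph m (w m + v m)"
            using G_bounds(2)[OF L al Cm a1(1)] .
          also have "\<dots> \<le> v m * ph m (w m + v m)" using a1 pnn by (intro mult_right_mono) auto
          finally show ?thesis using e1 by (simp add: a_def)
        qed
        show ?thesis using True p2 J by (simp add: algebra_simps)
      next
        case False
        hence xv: "x m \<le> v m" using \<open>\<not> (\<exists>m<M. W m < bt m \<and> x m > v m)\<close> m by force
        have "w m + v m \<le> bt m" using False f by simp
        hence "ph m (w m + v m) = L" using phi_low[OF L al Cm] by simp
        moreover have "max (w m + v m) (bt m) = bt m" "max (w m) (bt m) = bt m"
          using False f by auto
        ultimately show ?thesis using False xv L by (simp add: mult_nonpos_nonneg)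
      qed
    qed
    also have "\<dots> = (\<Sum>m<M. if bt m \<le> W m then ph m (W m) * x m else 0)
     - (\<Sum>m<M. GG m (max (w m + v m) (bt m)) - GG m (max (w m) (bt m)))"
      by (rule sum_subtractf)
    finally show ?thesis by simp
  qed
qed

end



lemma upper_bound:
  fixes L U \<alpha> :: real
  assumes L: "0 < L" and LU: "L \<le> U" and al: "1 < \<alpha>"
    and logeq: "\<alpha> - 1 - 1 / (\<alpha> - 1) = ln (U / L)"
    and VI: "valid_instance L U M C N D Y g"
    and run: "ota_run (\<lambda>m. phi_star L \<alpha> (C m)) M C N D Y g y"
  shows "OPT M C N D Y g \<le> \<alpha> * total_value M N g y"
proof -
  have Cpos: "\<forall>m<M. 0 < C m" and aB: "\<And>n. n < N \<Longrightarrow> assumptionB L U M (D n) (Y n) (g n)"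
    using VI unfolding valid_instance_def by auto
  define w where "w = (\<lambda>n m. \<Sum>k<n. y k m)"
  define W where "W = w N"
  have oc: "\<And>n. n < N \<Longrightarrow> ota_choice (\<lambda>m. phi_star L \<alpha> (C m)) M C (D n) (Y n) (g n) (w n) (y n)"
    using run unfolding ota_run_def w_def by auto
  have yP: "\<And>n. n < N \<Longrightarrow> y n \<in> Yset M (D n) (Y n) \<and> (\<forall>m<M. w n m + y n m \<le> C m)"
    using oc unfolding ota_choice_def Let_def by auto
  have y0: "\<And>n m. n < N \<Longrightarrow> m < M \<Longrightarrow> 0 \<le> y n m" using yP unfolding Yset_def by auto
  have wsuc: "\<And>n m. w (Suc n) m = w n m + y n m" by (simp add: w_def)
  have w0: "\<And>n m. n \<le> N \<Longrightarrow> m < M \<Longrightarrow> 0 \<le> w n m"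
    unfolding w_def using y0 by (intro sum_nonneg) auto
  have wle: "\<And>n m. n \<le> N \<Longrightarrow> m < M \<Longrightarrow> w n m \<le> W m"
    unfolding W_def w_def using y0 by (intro sum_mono2) auto
  have WC: "\<And>m. m < M \<Longrightarrow> W m \<le> C m"
  proof -
    fix m assume m: "m < M"
    show "W m \<le> C m"
    proof (cases N)
      case 0 thus ?thesis using Cpos m by (simp add: W_def w_def less_imp_le)
    next
      case (Suc n)
      hence "W m = w n m + y n m" by (simp add: W_def wsuc)
      thus ?thesis using yP[of n] Suc m by auto
    qed
  qed
  have WW: "\<And>n. n < N \<Longrightarrow> \<forall>m<M. w n m + y n m \<le> W m \<and> W m \<le> C m"
    using wle WC wsuc by (metis Suc_leI)
  have al1: "0 \<le> \<alpha> - 1" using al by simp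
  have w0': "\<And>n. n < N \<Longrightarrow> \<forall>m<M. 0 \<le> w n m" using w0 by simp
  let ?ALG = "total_value M N g y"
  let ?GW = "\<Sum>m<M. Gp L \<alpha> (C m) (W m)"
  have ALG_ge: "?GW \<le> ?ALG"
  proof -
    have "(\<Sum>n<N. \<Sum>m<M. Gp L \<alpha> (C m) (w n m + y n m) - Gp L \<alpha> (C m) (w n m)) \<le> ?ALG"
      unfolding total_value_def
    proof (rule sum_mono)
      fix n assume n: "n \<in> {..<N}"
      show "(\<Sum>m<M. Gp L \<alpha> (C m) (w n m + y n m) - Gp L \<alpha> (C m) (w n m)) \<le> g n (\<Sum>m<M. y n m)"
        using alg_lower[OF L LU al logeq Cpos aB oc w0' WW, of n] n by simp
    qed
    moreover have "(\<Sum>n<N. \<Sum>m<M. Gp L \<alpha> (C m) (w n m + y n m) - Gp L \<alpha> (C m) (w n m)) = ?GW"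
    proof -
      have "(\<Sum>n<N. \<Sum>m<M. Gp L \<alpha> (C m) (w n m + y n m) - Gp L \<alpha> (C m) (w n m))
          = (\<Sum>m<M. \<Sum>n<N. Gp L \<alpha> (C m) (w (Suc n) m) - Gp L \<alpha> (C m) (w n m))"
        by (subst sum.swap) (simp add: wsuc)
      also have "\<dots> = (\<Sum>m<M. Gp L \<alpha> (C m) (W m) - Gp L \<alpha> (C m) (w 0 m))"
        unfolding W_def by (rule sum.cong[OF refl], rule sum_lessThan_telescope)
      also have "\<dots> = ?GW"
      proof (rule sum.cong)
        fix m assume m: "m \<in> {..<M}"
        have "Gp L \<alpha> (C m) 0 = 0" using G_low[OF L al, of "C m" 0] Cpos m al by simp
        thus "Gp L \<alpha> (C m) (W m) - Gp L \<alpha> (C m) (w 0 m) = Gp L \<alpha> (C m) (W m)" by (simp add: w_def)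
      qed simp
      finally show ?thesis .
    qed
    ultimately show ?thesis by simp
  qed
  have feas_bound: "total_value M N g x \<le> \<alpha> * ?ALG" if xF: "offline_feasible M C N D Y x" for x
  proof -
    have xY: "\<And>n. n < N \<Longrightarrow> x n \<in> Yset M (D n) (Y n)" and xC: "\<And>m. m < M \<Longrightarrow> (\<Sum>n<N. x n m) \<le> C m"
      using xF unfolding offline_feasible_def by auto
    define H where "H = (\<lambda>n m. if C m / (\<alpha> - 1) \<le> W m then phi_star L \<alpha> (C m) (W m) * x n m else 0)"
    define J where "J = (\<lambda>n m. Gp L \<alpha> (C m) (max (w n m + y n m) (C m / (\<alpha> - 1)))
                               - Gp L \<alpha> (C m) (max (w n m) (C m / (\<alpha> - 1))))"
    have "total_value M N g x \<le> (\<Sum>n<N. g n (\<Sum>m<M. y n m) + (\<Sum>m<M. H n m) - (\<Sum>m<M. J n m))"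
      unfolding total_value_def
    proof (rule sum_mono)
      fix n assume n: "n \<in> {..<N}"
      show "g n (\<Sum>m<M. x n m) \<le> g n (\<Sum>m<M. y n m) + (\<Sum>m<M. H n m) - (\<Sum>m<M. J n m)"
        unfolding H_def J_def
        using item_bound[OF L LU al logeq Cpos aB oc w0' WW xY, of n] n by simp
    qed
    also have "\<dots> = ?ALG + (\<Sum>m<M. (\<Sum>n<N. H n m) - (\<Sum>n<N. J n m))"
      unfolding total_value_def
      by (simp add: sum.distrib sum_subtractf sum.swap[of _ "{..<N}" "{..<M}"])
    also have "(\<Sum>m<M. (\<Sum>n<N. H n m) - (\<Sum>n<N. J n m)) \<le> (\<alpha> - 1) * ?GW"
      unfolding sum_distrib_left
    proof (rule sum_mono)
      fix m assume m: "m \<in> {..<M}"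
      have Cm: "C m > 0" using Cpos m by simp
      have bt0: "C m / (\<alpha> - 1) > 0" using Cm al by simp
      have Jt: "(\<Sum>n<N. J n m) = Gp L \<alpha> (C m) (max (W m) (C m / (\<alpha> - 1))) - Gp L \<alpha> (C m) (C m / (\<alpha> - 1))"
      proof -
        have "(\<Sum>n<N. J n m) = (\<Sum>n<N. Gp L \<alpha> (C m) (max (w (Suc n) m) (C m / (\<alpha> - 1)))
                               - Gp L \<alpha> (C m) (max (w n m) (C m / (\<alpha> - 1))))"
          by (simp add: J_def wsuc)
        also have "\<dots> = Gp L \<alpha> (C m) (max (W m) (C m / (\<alpha> - 1))) - Gp L \<alpha> (C m) (max (w 0 m) (C m / (\<alpha> - 1)))"
          unfolding W_def by (rule sum_lessThan_telescope)
        finally show ?thesis using bt0 by (simp add: w_def max_def)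
      qed
      have W0: "0 \<le> W m" using w0[of N m] m by (simp add: W_def)
      have GWnn: "0 \<le> Gp L \<alpha> (C m) (W m)" using G_nonneg[OF L al Cm W0] .
      show "(\<Sum>n<N. H n m) - (\<Sum>n<N. J n m) \<le> (\<alpha> - 1) * Gp L \<alpha> (C m) (W m)"
      proof (cases "C m / (\<alpha> - 1) \<le> W m")
        case True
        have "(\<Sum>n<N. H n m) = phi_star L \<alpha> (C m) (W m) * (\<Sum>n<N. x n m)"
          using True by (simp add: H_def sum_distrib_left)
        also have "\<dots> \<le> phi_star L \<alpha> (C m) (W m) * C m"
          using xC[of m] m phi_ge[OF L al Cm, of "W m"] L by (intro mult_left_mono) auto
        finally have Hs: "(\<Sum>n<N. H n m) \<le> phi_star L \<alpha> (C m) (W m) * C m" .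
        have "Gp L \<alpha> (C m) (C m / (\<alpha> - 1)) = L * (C m / (\<alpha> - 1))" using G_low[OF L al Cm] by simp
        moreover have "\<alpha> * Gp L \<alpha> (C m) (W m) = C m * phi_star L \<alpha> (C m) (W m) + L * (C m / (\<alpha> - 1))"
          using G_high[OF L al Cm True] .
        ultimately show ?thesis using Hs Jt True by (simp add: algebra_simps)
      next
        case False
        have "(\<Sum>n<N. H n m) = 0" using False by (simp add: H_def)
        moreover have "(\<Sum>n<N. J n m) = 0" using Jt False by (simp add: max_def)
        ultimately show ?thesis using GWnn al1 by simp
      qed
    qed
    finally have "total_value M N g x \<le> ?ALG + (\<alpha> - 1) * ?GW" by simp
    also have "\<dots> \<le> ?ALG + (\<alpha> - 1) * ?ALG" using ALG_ge al1 by (intro add_left_mono mult_left_mono) auto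
    finally show ?thesis by (simp add: algebra_simps)
  qed
  have ne: "{x. offline_feasible M C N D Y x} \<noteq> {}"
  proof -
    have "offline_feasible M C N D Y (\<lambda>_ _. 0)"
      unfolding offline_feasible_def Yset_def
      using aB Cpos unfolding assumptionB_def by (auto simp: less_imp_le)
    thus ?thesis by blast
  qed
  show ?thesis unfolding OPT_def
    by (rule cSup_least) (use ne feas_bound in auto)
qed




lemma sum2: "(\<Sum>m<(2::nat). f m) = f 0 + f 1" for f :: "nat \<Rightarrow> real"
  by (simp add: numeral_2_eq_2)

context
  fixes L \<alpha> :: real
  assumes L: "0 < L" and al: "1 < \<alpha>" and al2: "2 \<le> \<alpha>"
begin

abbreviation "ph1 \<equiv> phi_star L \<alpha> 1"
abbreviation "G1 \<equiv> Gp L \<alpha> 1"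

lemma one_pos: "(0::real) < 1" by simp

lemma bt1: "1 / (\<alpha> - 1) \<le> 1" "0 < 1 / (\<alpha> - 1)" using al al2 by (auto simp: field_simps)

lemma item0_choice:
  "ota_choice (\<lambda>m. ph1) 2 (\<lambda>_. 1) (1 / (\<alpha> - 1)) (\<lambda>m. 1 / (\<alpha> - 1)) (\<lambda>s. L * s)
     (\<lambda>m. 0) (\<lambda>m. if m = 0 then 1 / (\<alpha> - 1) else 0)"
proof -
  let ?b = "1 / (\<alpha> - 1)"
  let ?v = "\<lambda>m::nat. if m = 0 then ?b else 0"
  have objz: "L * (\<Sum>m<2. u m) - (\<Sum>m<2. integral {0 + 0..0 + u m} ph1) = 0"
    if "u \<in> Yset 2 ?b (\<lambda>m. ?b)" for u
  proof -
    have "integral {0..u m} ph1 = L * u m" if "m < 2" for m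
    proof -
      have "0 \<le> u m" "u m \<le> ?b" using \<open>u \<in> _\<close> that unfolding Yset_def by auto
      thus ?thesis using int_phi[OF L al one_pos, of 0 "u m"] G_low[OF L al one_pos] bt1 by simp
    qed
    hence "(\<Sum>m<2. integral {0 + 0..0 + u m} ph1) = (\<Sum>m<2. L * u m)" by (intro sum.cong) auto
    thus ?thesis by (simp add: sum_distrib_left)
  qed
  have vY: "?v \<in> Yset 2 ?b (\<lambda>m. ?b)" unfolding Yset_def using bt1 by (auto simp: sum2)
  show ?thesis
    unfolding ota_choice_def Let_def
  proof (intro conjI ballI impI)
    show "?v \<in> {u \<in> Yset 2 ?b (\<lambda>m. ?b). \<forall>m<2. 0 + u m \<le> 1}" using vY bt1 by auto
  next
    fix u assume u: "u \<in> {u \<in> Yset 2 ?b (\<lambda>m. ?b). \<forall>m<2. 0 + u m \<le> 1}"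
    show "L * (\<Sum>m<2. u m) - (\<Sum>m<2. integral {0..0 + u m} ph1)
        \<le> L * (\<Sum>m<2. ?v m) - (\<Sum>m<2. integral {0..0 + ?v m} ph1)"
      using objz[of u] objz[OF vY] u by simp
    show "(\<Sum>m<2. u m) \<le> (\<Sum>m<2. ?v m)" using u unfolding Yset_def by (auto simp: sum2)
  qed
qed

lemma itemk_choice:
  assumes w0: "0 \<le> w0" and h: "0 < h" and wh: "w0 + h \<le> 1"
  shows "ota_choice (\<lambda>m. ph1) 2 (\<lambda>_. 1) h (\<lambda>m. if m = 0 then h else 0) (\<lambda>s. ph1 (w0 + h) * s)
     (\<lambda>m. if m = 0 then w0 else 0) (\<lambda>m. if m = 0 then h else 0)"
proof -
  let ?p = "ph1 (w0 + h)"
  let ?v = "\<lambda>m::nat. if m = 0 then h else 0"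
  let ?w = "\<lambda>m::nat. if m = 0 then w0 else 0"
  let ?Y = "Yset 2 h ?v"
  have obj: "?p * (\<Sum>m<2. u m) - (\<Sum>m<2. integral {?w m..?w m + u m} ph1)
       = ?p * u 0 - (G1 (w0 + u 0) - G1 w0)" if "u \<in> ?Y" for u
  proof -
    have A: "\<forall>m<2. 0 \<le> u m \<and> u m \<le> ?v m" using that unfolding Yset_def by blast
    have u1: "u 1 = 0" "0 \<le> u 0" using A[rule_format, of 1] A[rule_format, of 0] by auto
    show ?thesis using u1 int_phi[OF L al one_pos, of w0 "w0 + u 0"] by (simp add: sum2)
  qed
  have vY: "?v \<in> ?Y" unfolding Yset_def using h by (auto simp: sum2)
  show ?thesis
    unfolding ota_choice_def Let_def
  proof (intro conjI ballI impI)
    show "?v \<in> {u \<in> ?Y. \<forall>m<2. ?w m + u m \<le> 1}" using vY wh w0 h by auto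
  next
    fix u assume u: "u \<in> {u \<in> ?Y. \<forall>m<2. ?w m + u m \<le> 1}"
    have uY: "u \<in> ?Y" using u by simp
    have A: "\<forall>m<2. 0 \<le> u m \<and> u m \<le> ?v m" using uY unfolding Yset_def by blast
    have u0: "0 \<le> u 0" "u 0 \<le> h" "u 1 = 0" using A[rule_format, of 0] A[rule_format, of 1] by auto
    have "G1 (w0 + h) - G1 (w0 + u 0) \<le> (w0 + h - (w0 + u 0)) * ?p"
      using G_bounds(2)[OF L al one_pos, of "w0 + u 0" "w0 + h"] u0 by simp
    hence "?p * u 0 - (G1 (w0 + u 0) - G1 w0) \<le> ?p * h - (G1 (w0 + h) - G1 w0)"
      by (simp add: algebra_simps)
    thus "?p * (\<Sum>m<2. u m) - (\<Sum>m<2. integral {?w m..?w m + u m} ph1)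
        \<le> ?p * (\<Sum>m<2. ?v m) - (\<Sum>m<2. integral {?w m..?w m + ?v m} ph1)"
      using obj[OF uY] obj[OF vY] by simp
    show "(\<Sum>m<2. u m) \<le> (\<Sum>m<2. ?v m)" using u0 by (simp add: sum2)
  qed
qed

lemma itemZ_choice:
  "ota_choice (\<lambda>m. ph1) 2 (\<lambda>_. 1) 1 (\<lambda>m. if m = 0 then 1 else 0) (\<lambda>s. U * s)
     (\<lambda>m. if m = 0 then 1 else 0) (\<lambda>m. 0)"
proof -
  let ?w = "\<lambda>m::nat. if m = 0 then (1::real) else 0"
  let ?Y = "Yset 2 1 ?w"
  have zY: "(\<lambda>m. 0) \<in> ?Y" unfolding Yset_def by auto
  have uz: "u 0 = 0 \<and> u 1 = 0" if "u \<in> {u \<in> ?Y. \<forall>m<2. ?w m + u m \<le> 1}" for u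
  proof -
    have A: "\<forall>m<2. 0 \<le> u m \<and> u m \<le> ?w m" "\<forall>m<2. ?w m + u m \<le> 1"
      using that unfolding Yset_def by blast+
    show ?thesis using A(1)[rule_format, of 1] A(1)[rule_format, of 0] A(2)[rule_format, of 0] by auto
  qed
  show ?thesis
    unfolding ota_choice_def Let_def
  proof (intro conjI ballI impI)
    show "(\<lambda>m. 0) \<in> {u \<in> ?Y. \<forall>m<2. ?w m + u m \<le> 1}" using zY by auto
  next
    fix u assume u: "u \<in> {u \<in> ?Y. \<forall>m<2. ?w m + u m \<le> 1}"
    show "U * (\<Sum>m<2. u m) - (\<Sum>m<2. integral {?w m..?w m + u m} ph1)
        \<le> U * (\<Sum>m<2. (\<lambda>m. 0) m) - (\<Sum>m<2. integral {?w m..?w m + (\<lambda>m. 0) m} ph1)"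
      using uz[OF u] by (simp add: sum2)
    show "(\<Sum>m<2. u m) \<le> (\<Sum>m<2. (\<lambda>m. 0) m)" using uz[OF u] by (simp add: sum2)
  qed
qed

end



lemma assumptionB_linear:
  assumes L: "0 < L" and p: "L \<le> p" "p \<le> U" and D: "0 < Dn" and Y: "\<forall>m<M. 0 \<le> Yn m"
  shows "assumptionB L U M Dn Yn (\<lambda>s. p * s)"
proof -
  let ?S = "(\<lambda>v. \<Sum>m<M. v m) ` Yset M Dn Yn"
  have cvx: "convex ?S"
    unfolding convex_def
  proof (intro ballI allI impI)
    fix x y :: real and u v :: real
    assume x: "x \<in> ?S" and y: "y \<in> ?S" and uv: "0 \<le> u" "0 \<le> v" "u + v = 1"
    obtain a where a: "a \<in> Yset M Dn Yn" "x = (\<Sum>m<M. a m)" using x by blast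
    obtain b where b: "b \<in> Yset M Dn Yn" "y = (\<Sum>m<M. b m)" using y by blast
    define z where "z = (\<lambda>m. u * a m + v * b m)"
    have sz: "(\<Sum>m<M. z m) = u * x + v * y"
      by (simp add: z_def a b sum.distrib sum_distrib_left)
    have zY: "z \<in> Yset M Dn Yn"
      unfolding Yset_def
    proof (intro CollectI conjI allI impI)
      fix m assume m: "m < M"
      have am: "0 \<le> a m" "a m \<le> Yn m" using a m unfolding Yset_def by auto
      have bm: "0 \<le> b m" "b m \<le> Yn m" using b m unfolding Yset_def by auto
      show "0 \<le> z m" using am bm uv by (simp add: z_def)
      have "u * a m + v * b m \<le> u * Yn m + v * Yn m"
        using am bm uv by (intro add_mono mult_left_mono) auto
      moreover have "u * Yn m + v * Yn m = (u + v) * Yn m" by (simp add: algebra_simps)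
      ultimately show "z m \<le> Yn m" using uv by (simp add: z_def)
    next
      fix m assume "M \<le> m" thus "z m = 0" using a b unfolding Yset_def by (simp add: z_def)
    next
      have "u * x + v * y \<le> u * Dn + v * Dn"
        using a b uv unfolding Yset_def by (intro add_mono mult_left_mono) auto
      moreover have "u * Dn + v * Dn = (u + v) * Dn" by (simp add: algebra_simps)
      ultimately show "(\<Sum>m<M. z m) \<le> Dn" using sz uv by simp
    qed
    have "u *\<^sub>R x + v *\<^sub>R y = (\<Sum>m<M. z m)" using sz by simp
    thus "u *\<^sub>R x + v *\<^sub>R y \<in> ?S" using zY by blast
  qed
  have mono: "mono_on ?S (\<lambda>s. p * s)"
    by (rule mono_onI) (use L p in \<open>auto intro: mult_left_mono\<close>)
  have conc: "concave_on ?S (\<lambda>s. p * s)"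
    unfolding concave_on_iff using cvx by (auto simp: algebra_simps)
  have der: "\<exists>d. ((\<lambda>s. p * s) has_real_derivative d) (at s within ?S) \<and> L \<le> d \<and> d \<le> U" for s
  proof -
    have "((\<lambda>s. p * s) has_real_derivative p) (at s within ?S)"
      by (auto intro!: derivative_eq_intros)
    thus ?thesis using p by blast
  qed
  show ?thesis unfolding assumptionB_def Let_def using D Y mono conc der by auto
qed

lemma alpha_facts:
  fixes L U \<alpha> :: real
  assumes L: "0 < L" and LU: "L \<le> U" and al: "1 < \<alpha>" and logeq: "\<alpha> - 1 - 1 / (\<alpha> - 1) = ln (U / L)"
  shows "2 \<le> \<alpha>" "U = L \<Longrightarrow> \<alpha> = 2" "L < U \<Longrightarrow> 2 < \<alpha>"
proof -
  have key: "\<alpha> - 1 - 1 / (\<alpha> - 1) = ((\<alpha> - 1) * (\<alpha> - 1) - 1) / (\<alpha> - 1)" using al by (simp add: field_simps)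
  have "U / L \<ge> 1" using L LU by simp
  hence "ln (U / L) \<ge> 0" by simp
  hence "((\<alpha> - 1) * (\<alpha> - 1) - 1) / (\<alpha> - 1) \<ge> 0" using logeq key by simp
  hence sq: "(\<alpha> - 1) * (\<alpha> - 1) \<ge> 1" using al by (simp add: divide_nonneg_pos zero_le_divide_iff)
  have lt: "(\<alpha> - 1) * (\<alpha> - 1) < 1" if "\<alpha> < 2"
    using mult_strict_mono[of "\<alpha> - 1" 1 "\<alpha> - 1" 1] that al by simp
  show a2: "2 \<le> \<alpha>" using sq lt by linarith
  show "\<alpha> = 2" if "U = L"
  proof -
    have "ln (U / L) = 0" using that L by simp
    hence "(\<alpha> - 1) * (\<alpha> - 1) - 1 = 0" using logeq key al by simp
    hence "(\<alpha> - 2) * \<alpha> = 0" by (simp add: algebra_simps)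
    thus ?thesis using al by simp
  qed
  show "2 < \<alpha>" if "L < U"
  proof (rule ccontr)
    assume "\<not> 2 < \<alpha>" hence "\<alpha> = 2" using a2 by simp
    hence "ln (U / L) = 0" using logeq by simp
    hence "U / L = 1" using L that by simp
    thus False using L that by simp
  qed
qed




lemma exp_step:
  fixes a t h \<alpha> :: real
  assumes "0 < \<alpha>" "t = \<alpha> * h"
  shows "exp (a + t) * h \<le> (1 + t) / \<alpha> * (exp (a + t) - exp a)"
proof -
  have "1 + t \<le> exp t" by (rule exp_ge_add_one_self)
  hence "exp a * (1 + t) \<le> exp a * exp t" by (intro mult_left_mono) auto
  hence "(1 + t) * exp a \<le> exp (a + t)" by (simp add: exp_add algebra_simps)
  hence "t * exp (a + t) \<le> (1 + t) * (exp (a + t) - exp a)" by (simp add: algebra_simps)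
  thus ?thesis using assms by (simp add: field_simps)
qed

lemma instance_K:
  fixes L U \<alpha> h :: real and K :: nat
  assumes L: "0 < L" and LU: "L \<le> U" and al: "1 < \<alpha>"
    and logeq: "\<alpha> - 1 - 1 / (\<alpha> - 1) = ln (U / L)"
    and Kh: "real K * h = 1 - 1 / (\<alpha> - 1)" and h0: "0 \<le> h" and Kh0: "K = 0 \<or> 0 < h"
  shows "\<exists>C N D Y g y. valid_instance L U 2 C N D Y g
     \<and> ota_run (\<lambda>m. phi_star L \<alpha> (C m)) 2 C N D Y g y
     \<and> L * (1 / (\<alpha> - 1)) + U \<le> OPT 2 C N D Y g
     \<and> 0 \<le> total_value 2 N g y
     \<and> total_value 2 N g y \<le> L * (1 / (\<alpha> - 1)) + (1 + \<alpha> * h) * (U - L) / \<alpha>"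
proof -
  have al2: "2 \<le> \<alpha>" using alpha_facts[OF L LU al logeq] by simp
  define b where "b = 1 / (\<alpha> - 1)"
  have b: "0 < b" "b \<le> 1" using bt1[OF L al al2] by (auto simp: b_def)
  have ab: "\<alpha> * b = \<alpha> / (\<alpha> - 1)" by (simp add: b_def)
  define N where "N = Suc (Suc K)"
  define C where "C = (\<lambda>_::nat. 1::real)"
  define p where "p = (\<lambda>n::nat. if n = 0 then L else if n \<le> K then L * exp (\<alpha> * real n * h) else U)"
  define D where "D = (\<lambda>n::nat. if n = 0 then b else if n \<le> K then h else 1)"
  define Y where "Y = (\<lambda>n::nat. if n = 0 then (\<lambda>m::nat. b) else (\<lambda>m. if m = 0 then D n else 0))"
  define g where "g = (\<lambda>n::nat. \<lambda>s::real. p n * s)"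
  define y where "y = (\<lambda>n::nat. if n = 0 then (\<lambda>m::nat. if m = 0 then b else 0)
                       else if n \<le> K then (\<lambda>m. if m = 0 then h else 0) else (\<lambda>m. 0))"
  have ekh: "exp (\<alpha> * real K * h) = U / L"
  proof -
    have "\<alpha> * real K * h = \<alpha> * (1 - b)" using Kh by (simp add: b_def mult.assoc)
    also have "\<dots> = \<alpha> - 1 - 1 / (\<alpha> - 1)" using al by (simp add: b_def field_simps)
    finally show ?thesis using logeq L LU by simp
  qed
  have pK: "L \<le> p n \<and> p n \<le> U" for n
  proof (cases "n = 0 \<or> K < n")
    case True thus ?thesis using LU by (auto simp: p_def)
  next
    case False
    hence n: "1 \<le> n" "n \<le> K" by auto
    hence hp: "0 < h" using Kh0 by auto
    have "0 \<le> \<alpha> * real n * h" using al hp by simp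
    hence e1: "1 \<le> exp (\<alpha> * real n * h)" by simp
    have "\<alpha> * real n * h \<le> \<alpha> * real K * h" using n al hp by (simp add: mult_right_mono)
    hence "exp (\<alpha> * real n * h) \<le> U / L" using ekh by (metis exp_le_cancel_iff)
    hence "L * exp (\<alpha> * real n * h) \<le> U" using L by (simp add: field_simps)
    moreover have "L \<le> L * exp (\<alpha> * real n * h)" using e1 L by simp
    ultimately show ?thesis using n by (simp add: p_def)
  qed
  have VI: "valid_instance L U 2 C N D Y g"
    unfolding valid_instance_def
  proof (intro conjI allI impI)
    show "(1::nat) \<le> 2" by simp
    fix m show "0 < C m" by (simp add: C_def)
  next
    fix n assume "n < N"
    have Dp: "0 < D n" using b Kh0 by (auto simp: D_def)
    have Yp: "\<forall>m<2. 0 \<le> Y n m" using b Dp by (auto simp: Y_def less_imp_le)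
    show "assumptionB L U 2 (D n) (Y n) (g n)"
      unfolding g_def using assumptionB_linear[OF L _ _ Dp Yp] pK by blast
  qed
  have wform: "(\<Sum>k<n. y k m) = (if n = 0 \<or> m \<noteq> 0 then 0 else b + real (n - 1) * h)"
    if "n \<le> Suc K" for n m
    using that
  proof (induction n)
    case 0 thus ?case by simp
  next
    case (Suc n)
    hence IH: "(\<Sum>k<n. y k m) = (if n = 0 \<or> m \<noteq> 0 then 0 else b + real (n - 1) * h)" by simp
    have "(\<Sum>k<Suc n. y k m) = (\<Sum>k<n. y k m) + y n m" by simp
    also have "\<dots> = (if Suc n = 0 \<or> m \<noteq> 0 then 0 else b + real (Suc n - 1) * h)"
    proof (cases "n = 0")
      case True thus ?thesis using IH by (simp add: y_def)
    next
      case False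
      hence "n \<le> K" using Suc.prems by simp
      thus ?thesis using IH False by (cases n) (auto simp: y_def algebra_simps)
    qed
    finally show ?case .
  qed
  have phiC: "(\<lambda>m. phi_star L \<alpha> (C m)) = (\<lambda>m. phi_star L \<alpha> 1)" by (simp add: C_def)
  have RUN: "ota_run (\<lambda>m. phi_star L \<alpha> (C m)) 2 C N D Y g y"
    unfolding ota_run_def phiC
  proof (intro allI impI)
    fix n assume n: "n < N"
    show "ota_choice (\<lambda>m. phi_star L \<alpha> 1) 2 C (D n) (Y n) (g n) (\<lambda>m. \<Sum>k<n. y k m) (y n)"
    proof (cases "n = 0")
      case True
      have w: "(\<lambda>m. \<Sum>k<n. y k m) = (\<lambda>m. 0)" using True by simp
      show ?thesis unfolding w using item0_choice[OF L al al2, folded b_def] True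
        by (simp add: C_def D_def Y_def g_def p_def y_def)
    next
      case False
      show ?thesis
      proof (cases "n \<le> K")
        case True
        have hp: "0 < h" using Kh0 True False by auto
        define w0 where "w0 = b + real (n - 1) * h"
        have w: "(\<lambda>m. \<Sum>k<n. y k m) = (\<lambda>m. if m = 0 then w0 else 0)"
          using wform[of n] True False by (auto simp: w0_def)
        have w00: "0 \<le> w0" using b hp by (simp add: w0_def)
        have wn: "w0 + h = b + real n * h" using False by (simp add: w0_def of_nat_diff algebra_simps)
        have "real n * h \<le> real K * h" using True hp by (simp add: mult_right_mono)
        hence wh: "w0 + h \<le> 1" using wn Kh by (simp add: b_def)
        have "phi_star L \<alpha> 1 (w0 + h) = L * exp (max 0 (\<alpha> / 1 * (b + real n * h) - \<alpha> / (\<alpha> - 1)))"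
          using phi_alt[OF L al, of 1] wn by simp
        also have "\<alpha> / 1 * (b + real n * h) - \<alpha> / (\<alpha> - 1) = \<alpha> * real n * h"
          using ab by (simp add: algebra_simps)
        also have "max 0 (\<alpha> * real n * h) = \<alpha> * real n * h" using al hp by simp
        finally have pn: "phi_star L \<alpha> 1 (w0 + h) = p n" using True False by (simp add: p_def)
        have gn: "g n = (\<lambda>s. phi_star L \<alpha> 1 (w0 + h) * s)" using pn by (simp add: g_def)
        have Dn: "D n = h" using True False by (simp add: D_def)
        have Yn: "Y n = (\<lambda>m. if m = 0 then h else 0)" using True False by (auto simp: Y_def D_def)
        have yn: "y n = (\<lambda>m. if m = 0 then h else 0)" using True False by (simp add: y_def)
        show ?thesis unfolding w gn Dn Yn yn using itemk_choice[OF L al al2 w00 hp wh]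
          by (simp add: C_def)
      next
        case K: False
        hence nK: "n = Suc K" using n by (simp add: N_def)
        have "b + real (n - 1) * h = 1" using nK Kh by (simp add: b_def)
        hence w: "(\<lambda>m. \<Sum>k<n. y k m) = (\<lambda>m. if m = 0 then 1 else 0)"
          using wform[of n] nK by auto
        have Dn: "D n = 1" using K False by (simp add: D_def)
        have Yn: "Y n = (\<lambda>m. if m = 0 then 1 else 0)" using K False by (auto simp: Y_def D_def)
        have yn: "y n = (\<lambda>m. 0)" using K False by (simp add: y_def)
        have gn: "g n = (\<lambda>s. U * s)" using K False by (simp add: g_def p_def)
        show ?thesis unfolding w gn Dn Yn yn using itemZ_choice[OF L al al2, of U]
          by (simp add: C_def)
      qed
    qed
  qed
  have sumN: "(\<Sum>n<N. f n) = f 0 + (\<Sum>n<K. f (Suc n)) + f (Suc K)" for f :: "nat \<Rightarrow> real"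
  proof -
    have "(\<Sum>n<N. f n) = (\<Sum>n<Suc K. f n) + f (Suc K)" unfolding N_def by (rule sum.lessThan_Suc)
    also have "(\<Sum>n<Suc K. f n) = f 0 + (\<Sum>n<K. f (Suc n))" by (rule sum.lessThan_Suc_shift)
    finally show ?thesis .
  qed
  have OPTge: "L * b + U \<le> OPT 2 C N D Y g"
  proof -
    define x where "x = (\<lambda>n::nat. if n = 0 then (\<lambda>m::nat. if m = 1 then b else 0)
                     else if n = Suc K then (\<lambda>m. if m = 0 then 1 else 0) else (\<lambda>m. 0::real))"
    have xF: "offline_feasible 2 C N D Y x"
      unfolding offline_feasible_def
    proof (intro conjI allI impI)
      fix n assume n: "n < N"
      show "x n \<in> Yset 2 (D n) (Y n)"
      proof (cases "n = 0")
        case True thus ?thesis using b by (simp add: x_def Yset_def D_def Y_def sum2)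
      next
        case False
        show ?thesis
        proof (cases "n = Suc K")
          case True thus ?thesis by (simp add: x_def Yset_def D_def Y_def sum2)
        next
          case False
          have "0 < D n" using b Kh0 \<open>n \<noteq> 0\<close> by (auto simp: D_def)
          thus ?thesis using \<open>n \<noteq> 0\<close> False by (auto simp: x_def Yset_def Y_def)
        qed
      qed
    next
      fix m :: nat assume m: "m < 2"
      have "(\<Sum>n<N. x n m) = x 0 m + (\<Sum>n<K. x (Suc n) m) + x (Suc K) m" by (rule sumN)
      also have "(\<Sum>n<K. x (Suc n) m) = 0" by (simp add: x_def)
      finally show "(\<Sum>n<N. x n m) \<le> C m" using m b by (cases m) (auto simp: x_def C_def)
    qed
    have tv: "total_value 2 N g x = L * b + U"
    proof -
      have "total_value 2 N g x = g 0 (\<Sum>m<2. x 0 m) + (\<Sum>n<K. g (Suc n) (\<Sum>m<2. x (Suc n) m))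
             + g (Suc K) (\<Sum>m<2. x (Suc K) m)"
        unfolding total_value_def by (rule sumN)
      also have "(\<Sum>n<K. g (Suc n) (\<Sum>m<2. x (Suc n) m)) = 0" by (simp add: x_def g_def)
      finally show ?thesis by (simp add: x_def g_def p_def sum2)
    qed
    have bdd: "bdd_above (total_value 2 N g ` {x. offline_feasible 2 C N D Y x})"
    proof (rule bdd_aboveI2)
      fix x assume "x \<in> {x. offline_feasible 2 C N D Y x}"
      hence xY: "\<And>n. n < N \<Longrightarrow> x n \<in> Yset 2 (D n) (Y n)" unfolding offline_feasible_def by auto
      show "total_value 2 N g x \<le> (\<Sum>n<N. p n * D n)"
        unfolding total_value_def
      proof (rule sum_mono)
        fix n assume "n \<in> {..<N}"
        hence "(\<Sum>m<2. x n m) \<le> D n" using xY unfolding Yset_def by auto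
        moreover have "0 \<le> p n" using pK[of n] L by simp
        ultimately show "g n (\<Sum>m<2. x n m) \<le> p n * D n" by (simp add: g_def mult_left_mono)
      qed
    qed
    have "total_value 2 N g x \<le> OPT 2 C N D Y g"
      unfolding OPT_def by (rule cSup_upper) (use xF bdd in auto)
    thus ?thesis using tv by simp
  qed
  have ALG: "total_value 2 N g y = L * b + (\<Sum>n<K. L * exp (\<alpha> * real (Suc n) * h) * h)"
  proof -
    have "total_value 2 N g y = g 0 (\<Sum>m<2. y 0 m) + (\<Sum>n<K. g (Suc n) (\<Sum>m<2. y (Suc n) m))
             + g (Suc K) (\<Sum>m<2. y (Suc K) m)"
      unfolding total_value_def by (rule sumN)
    also have "(\<Sum>n<K. g (Suc n) (\<Sum>m<2. y (Suc n) m)) = (\<Sum>n<K. L * exp (\<alpha> * real (Suc n) * h) * h)"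
      by (intro sum.cong) (auto simp: g_def p_def y_def sum2)
    finally show ?thesis by (simp add: g_def p_def y_def sum2)
  qed
  have Sb: "(\<Sum>n<K. L * exp (\<alpha> * real (Suc n) * h) * h) \<le> (1 + \<alpha> * h) * (U - L) / \<alpha>"
  proof (cases "K = 0")
    case True thus ?thesis using al h0 LU by simp
  next
    case False
    hence hp: "0 < h" using Kh0 by simp
    have "(\<Sum>n<K. L * exp (\<alpha> * real (Suc n) * h) * h)
        \<le> (\<Sum>n<K. L * ((1 + \<alpha> * h) / \<alpha> * (exp (\<alpha> * real (Suc n) * h) - exp (\<alpha> * real n * h))))"
    proof (rule sum_mono)
      fix n assume "n \<in> {..<K}"
      have "exp (\<alpha> * real n * h + \<alpha> * h) * h \<le> (1 + \<alpha> * h) / \<alpha> * (exp (\<alpha> * real n * h + \<alpha> * h) - exp (\<alpha> * real n * h))"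
        using exp_step[of \<alpha> "\<alpha> * h" h "\<alpha> * real n * h"] al by simp
      moreover have "\<alpha> * real n * h + \<alpha> * h = \<alpha> * real (Suc n) * h" by (simp add: algebra_simps)
      ultimately have st: "exp (\<alpha> * real (Suc n) * h) * h \<le> (1 + \<alpha> * h) / \<alpha> * (exp (\<alpha> * real (Suc n) * h) - exp (\<alpha> * real n * h))"
        by simp
      show "L * exp (\<alpha> * real (Suc n) * h) * h \<le> L * ((1 + \<alpha> * h) / \<alpha> * (exp (\<alpha> * real (Suc n) * h) - exp (\<alpha> * real n * h)))"
        using mult_left_mono[OF st, of L] L by (simp only: mult.assoc)
    qed
    also have "\<dots> = L * ((1 + \<alpha> * h) / \<alpha>) * (\<Sum>n<K. exp (\<alpha> * real (Suc n) * h) - exp (\<alpha> * real n * h))"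
      by (simp add: sum_distrib_left mult.assoc)
    also have "(\<Sum>n<K. exp (\<alpha> * real (Suc n) * h) - exp (\<alpha> * real n * h)) = exp (\<alpha> * real K * h) - exp (\<alpha> * real 0 * h)"
      by (rule sum_lessThan_telescope[where f = "\<lambda>n. exp (\<alpha> * real n * h)"])
    also have "L * ((1 + \<alpha> * h) / \<alpha>) * (exp (\<alpha> * real K * h) - exp (\<alpha> * real 0 * h)) = (1 + \<alpha> * h) * (U - L) / \<alpha>"
      using ekh L by (simp add: field_simps)
    finally show ?thesis .
  qed
  have "0 \<le> (\<Sum>n<K. L * exp (\<alpha> * real (Suc n) * h) * h)" using L h0 by (intro sum_nonneg) simp
  hence ALG0: "0 \<le> total_value 2 N g y" using ALG L b by simp
  show ?thesis
    using VI RUN OPTge ALG0 ALG Sb by (intro exI[of _ C] exI[of _ N] exI[of _ D] exI[of _ Y] exI[of _ g] exI[of _ y])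
      (simp add: b_def)
qed




lemma lower_bound:
  fixes L U \<alpha> c :: real
  assumes L: "0 < L" and LU: "L \<le> U" and al: "1 < \<alpha>"
    and logeq: "\<alpha> - 1 - 1 / (\<alpha> - 1) = ln (U / L)" and c: "c < \<alpha>"
  shows "\<exists>M C N D Y g y. valid_instance L U M C N D Y g \<and> ota_run (\<lambda>m. phi_star L \<alpha> (C m)) M C N D Y g y
        \<and> OPT M C N D Y g > c * total_value M N g y"
proof -
  define b where "b = 1 / (\<alpha> - 1)"
  define A0 where "A0 = L * b + (U - L) / \<alpha>"
  have b0: "0 < b" using al by (simp add: b_def)
  have A0p: "0 < A0" using b0 L LU al by (simp add: A0_def add_pos_nonneg)
  have aA0: "\<alpha> * A0 = L * b + U"
  proof -
    have "\<alpha> * A0 = \<alpha> * L * b + (U - L)" using al by (simp add: A0_def field_simps)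
    also have "\<alpha> * L * b = L * b + L" using al by (simp add: b_def field_simps)
    finally show ?thesis by simp
  qed
  have ex: "\<exists>K h. real K * h = 1 - b \<and> 0 \<le> h \<and> (K = 0 \<or> 0 < h) \<and> (\<bar>c\<bar> + 1) * h * (U - L) \<le> (\<alpha> - c) * A0"
  proof (cases "U = L")
    case True
    hence "\<alpha> = 2" using alpha_facts[OF L LU al logeq] by simp
    hence "b = 1" by (simp add: b_def)
    thus ?thesis using True c A0p by (intro exI[of _ 0] exI[of _ 0]) simp
  next
    case False
    hence LU': "L < U" using LU by simp
    hence "2 < \<alpha>" using alpha_facts[OF L LU al logeq] by simp
    hence b1: "b < 1" by (simp add: b_def)
    define \<delta> where "\<delta> = (\<alpha> - c) * A0 / ((\<bar>c\<bar> + 1) * (U - L))"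
    have dp: "0 < \<delta>" using c A0p LU' by (simp add: \<delta>_def)
    obtain K :: nat where K: "K > 0" "inverse (real K) < \<delta> / (1 - b)"
      using ex_inverse_of_nat_less[of "\<delta> / (1 - b)"] dp b1 by auto
    define h where "h = (1 - b) / real K"
    have hp: "0 < h" using K b1 by (simp add: h_def)
    have Kh: "real K * h = 1 - b" using K by (simp add: h_def)
    have "h = (1 - b) * inverse (real K)" by (simp add: h_def divide_inverse)
    also have "\<dots> < (1 - b) * (\<delta> / (1 - b))" using K b1 by (intro mult_strict_left_mono) auto
    also have "\<dots> = \<delta>" using b1 by simp
    finally have hd: "h < \<delta>" .
    have "(\<bar>c\<bar> + 1) * (U - L) * h \<le> (\<bar>c\<bar> + 1) * (U - L) * \<delta>"
      using hd LU' by (intro mult_left_mono) auto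
    also have "\<dots> = (\<alpha> - c) * A0" using LU' by (simp add: \<delta>_def)
    finally show ?thesis using Kh hp by (intro exI[of _ K] exI[of _ h]) (simp add: algebra_simps)
  qed
  then obtain K h where Kh: "real K * h = 1 - b" and h0: "0 \<le> h" and Kh0: "K = 0 \<or> 0 < h"
    and hc: "(\<bar>c\<bar> + 1) * h * (U - L) \<le> (\<alpha> - c) * A0" by blast
  obtain C N D Y g y where VI: "valid_instance L U 2 C N D Y g"
    and RUN: "ota_run (\<lambda>m. phi_star L \<alpha> (C m)) 2 C N D Y g y"
    and OP: "L * (1 / (\<alpha> - 1)) + U \<le> OPT 2 C N D Y g"
    and A0': "0 \<le> total_value 2 N g y"
    and AB: "total_value 2 N g y \<le> L * (1 / (\<alpha> - 1)) + (1 + \<alpha> * h) * (U - L) / \<alpha>"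
    using instance_K[OF L LU al logeq Kh[unfolded b_def] h0 Kh0] by blast
  have AB': "total_value 2 N g y \<le> A0 + h * (U - L)"
  proof -
    have "(1 + \<alpha> * h) * (U - L) / \<alpha> = (U - L) / \<alpha> + h * (U - L)" using al by (simp add: field_simps)
    thus ?thesis using AB by (simp add: A0_def b_def)
  qed
  have "c * total_value 2 N g y < L * b + U"
  proof (cases "c \<le> 0")
    case True
    hence "c * total_value 2 N g y \<le> 0" using A0' by (simp add: mult_nonpos_nonneg)
    thus ?thesis using L b0 LU by (smt (verit) mult_pos_pos)
  next
    case False
    hence cp: "0 < c" by simp
    have "c * total_value 2 N g y \<le> c * (A0 + h * (U - L))" using AB' cp by (intro mult_left_mono) auto
    also have "\<dots> < \<alpha> * A0"
    proof -
      have hU: "0 \<le> h * (U - L)" using h0 LU by simp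
      have "c * (h * (U - L)) < (\<alpha> - c) * A0"
      proof (cases "h * (U - L) = 0")
        case True
        have "0 < (\<alpha> - c) * A0" using c A0p by simp
        thus ?thesis using True by (simp only: mult_zero_right mult_zero_left)
      next
        case False
        hence "0 < h * (U - L)" using hU by linarith
        hence "c * (h * (U - L)) < (\<bar>c\<bar> + 1) * h * (U - L)" using cp by (simp add: algebra_simps)
        thus ?thesis using hc by simp
      qed
      thus ?thesis by (simp add: algebra_simps)
    qed
    finally show ?thesis using aA0 by simp
  qed
  hence "c * total_value 2 N g y < OPT 2 C N D Y g" using OP by (simp add: b_def)
  thus ?thesis using VI RUN by blast
qed

theorem theorem3:
  fixes L U \<alpha> :: real
  assumes "0 < L" and "L \<le> U"
    and "\<alpha> > 1" and "\<alpha> - 1 - 1 / (\<alpha> - 1) = ln (U / L)"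
  shows "competitive_ratio_is L U (\<lambda>C m. phi_star L \<alpha> (C m)) \<alpha>"
  unfolding competitive_ratio_is_def
  using upper_bound[OF assms] lower_bound[OF assms] by blast


end
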